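(* Let $i,p,q\ge-1$ and let $v\in C([0,1],L(\mathbb{R}^d,\mathbb{R}^n))$, $w\in C([0,1],\mathbb{R}^d)$. If $p\vee q\le i$, then \[ \|\Delta_i(\Delta_pv\,\Delta_qw)\|_\infty\lesssim 2^{-(i\vee p\vee q)-i+p+q}\|\Delta_pv\|_\infty\|\Delta_qw\|_\infty, \] except when $i=q>p$ or $i=p>q$, in which case one only has $\|\Delta_i(\Delta_pv\,\Delta_qw)\|_\infty\lesssim\|\Delta_pv\|_\infty\|\Delta_qw\|_\infty$. If $p>i$ or $q>i$, then $\Delta_i(\Delta_pv\,\Delta_qw)\equiv0$.
   Context: Index set: pairs $(p,m)$ with either $p=-1,m=0$, or $p\in\mathbb{N}=\{0,1,2,\dots\}$ and $0\le m\le 2^p$. For $p\in\mathbb{N}$, $1\le m\le 2^p$ set $t^0_{pm}=(m-1)2^{-p}$, $t^1_{pm}=(2m-1)2^{-p-1}$, $t^2_{pm}=m2^{-p}$. Rescaled Haar functions: for $p\in\mathbb{N}$, $1\le m\le 2^p$, $\chi_{pm}=2^p$ on $[t^0_{pm},t^1_{pm})$, $=-2^p$ on $[t^1_{pm},t^2_{pm})$, $=0$ elsewhere; $\chi_{00}\equiv1$; $\chi_{p0}\equiv0$ for $p\ge1$. Rescaled Schauder functions: $\varphi_{pm}(t)=\int_0^t\chi_{pm}(s)\,ds$ for $p\in\mathbb{N}$, and $\varphi_{-10}\equiv1$. For continuous $f:[0,1]\to E$ ($E$ a finite-dimensional normed space), coefficients: $f_{-10}=f(0)$, $f_{00}=f(1)-f(0)$,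 $f_{p0}=0$ for $p\ge1$, $f_{pm}=2f(t^1_{pm})-f(t^0_{pm})-f(t^2_{pm})$ for $p\in\mathbb{N},m\ge1$. Schauder blocks: $\Delta_pf=\sum_{m=0}^{2^p}f_{pm}\varphi_{pm}$ for $p\ge-1$. $\|\cdot\|_\infty$ is the sup norm; $a\vee b=\max(a,b)$; $\lesssim$ hides a constant independent of $i,p,q,v,w$. *)

theory Defs
  imports "HOL-Analysis.Analysis"
begin

definition tt0 :: "nat \<Rightarrow> nat \<Rightarrow> real" where
  "tt0 p m = (real m - 1) / 2 ^ p"
definition tt1 :: "nat \<Rightarrow> nat \<Rightarrow> real" where
  "tt1 p m = (2 * real m - 1) / 2 ^ (p + 1)"
definition tt2 :: "nat \<Rightarrow> nat \<Rightarrow> real" where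
  "tt2 p m = real m / 2 ^ p"

definition haar :: "nat \<Rightarrow> nat \<Rightarrow> real \<Rightarrow> real" where
  "haar p m t =
     (if m = 0 then (if p = 0 then 1 else 0)
      else if tt0 p m \<le> t \<and> t < tt1 p m then 2 ^ p
      else if tt1 p m \<le> t \<and> t < tt2 p m then - (2 ^ p)
      else 0)"

definition schauder :: "int \<Rightarrow> nat \<Rightarrow> real \<Rightarrow> real" where
  "schauder p m t = (if p = -1 then 1 else integral {0..t} (haar (nat p) m))"

definition schauder_idx :: "int \<Rightarrow> nat set" where
  "schauder_idx p = (if p = -1 then {0} else {0..2 ^ nat p})"

definition schauder_coeff :: "(real \<Rightarrow> 'a::real_normed_vector) \<Rightarrow> int \<Rightarrow> nat \<Rightarrow> 'a" where
  "schauder_coeff f p m =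
     (if p = -1 then (if m = 0 then f 0 else 0)
      else if m = 0 then (if p = 0 then f 1 - f 0 else 0)
      else 2 *\<^sub>R f (tt1 (nat p) m) - f (tt0 (nat p) m) - f (tt2 (nat p) m))"

definition schauder_block :: "int \<Rightarrow> (real \<Rightarrow> 'a::real_normed_vector) \<Rightarrow> real \<Rightarrow> 'a" where
  "schauder_block p f t = (\<Sum>m\<in>schauder_idx p. schauder p m t *\<^sub>R schauder_coeff f p m)"

definition supnorm01 :: "(real \<Rightarrow> 'a::real_normed_vector) \<Rightarrow> real" where
  "supnorm01 g = (SUP t\<in>{0..1}. norm (g t))"

end

theory Submission
  imports Defs
begin

lemma int_ind_const:
  fixes a b c t :: real
  assumes "0 \<le> a"
  shows "integral {0..t} (\<lambda>s. if s \<in> {a..b} then c else 0) = max 0 (min t b - a) * c"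
proof -
  have "integral {0..t} (\<lambda>s. if s \<in> {a..b} then c else 0) = integral ({a..b} \<inter> {0..t}) (\<lambda>s. c)"
    by (rule integral_restrict_Int)
  also have "{a..b} \<inter> {0..t} = {a..min t b}" using assms by auto
  also have "integral {a..min t b} (\<lambda>s. c) = max 0 (min t b - a) * c"
    by (simp add: integral_const_real) (auto simp: max_def min_def)
  finally show ?thesis .
qed

lemma int_ind_integrable:
  fixes a b c t :: real
  shows "(\<lambda>s. if s \<in> {a..b} then c else 0) integrable_on {0..t}"
proof -
  have "(\<lambda>s. c) integrable_on ({a..b} \<inter> {0..t})"
    by (simp add: Int_atLeastAtMost integrable_const_ivl)
  then show ?thesis by (simp only: integrable_restrict_Int)
qed

lemma scale_mm: "0 < (c::real) \<Longrightarrow> max 0 (min t b - a) * c = max 0 (min (c*t) (c*b) - c*a)"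
proof -
  assume c: "0 < c"
  have "min (c*t) (c*b) = c * min t b" using c by (simp add: min_mult_distrib_left)
  moreover have "max 0 (c*min t b - c*a) = c * max 0 (min t b - a)" using c by (simp add: max_mult_distrib_left right_diff_distrib)
  ultimately show ?thesis by (simp add: mult.commute)
qed

lemma tent_lin: "max 0 (min y (m-1/2) - (m-1)) - max 0 (min y m - (m - 1/2)) = max 0 (1/2 - \<bar>y - (m - 1/2)\<bar>)" for y m :: real
  by (simp add: max_def min_def abs_if)

definition tentv :: "real \<Rightarrow> nat \<Rightarrow> real" where
  "tentv y m = max 0 (1/2 - \<bar>y - (real m - 1/2)\<bar>)"

lemma schauder_tent:
  assumes m: "m \<ge> 1"
  shows "schauder (int p) m t = tentv (2^p * t) m"
proof -
  define c :: real where "c = 2^p"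
  have c: "c > 0" by (simp add: c_def)
  define a0 where "a0 = tt0 p m"
  define a1 where "a1 = tt1 p m"
  define a2 where "a2 = tt2 p m"
  have ca0: "c * a0 = real m - 1" unfolding c_def a0_def tt0_def by simp
  have ca1: "c * a1 = real m - 1/2" unfolding c_def a1_def tt1_def by (simp add: field_simps)
  have ca2: "c * a2 = real m" unfolding c_def a2_def tt2_def by simp
  have a0: "0 \<le> a0" using m unfolding a0_def tt0_def by simp
  have a1: "0 \<le> a1" using m unfolding a1_def tt1_def by simp
  have "c*a0 < c*a1" using ca0 ca1 by simp
  then have ord1: "a0 < a1" using c by simp
  have "c*a1 < c*a2" using ca2 ca1 by simp
  then have ord2: "a1 < a2" using c by simp
  have "schauder (int p) m t = integral {0..t} (haar p m)"
    by (simp add: schauder_def)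
  also have "\<dots> = integral {0..t} (\<lambda>s. (if s \<in> {a0..a1} then c else 0) - (if s \<in> {a1..a2} then c else 0))"
  proof (rule integral_spike[where S="{a1,a2}"])
    show "negligible {a1, a2}" by simp
    fix s assume "s \<in> {0..t} - {a1, a2}"
    then show "(if s \<in> {a0..a1} then c else 0) - (if s \<in> {a1..a2} then c else 0) = haar p m s"
      using m ord1 ord2 unfolding haar_def a0_def a1_def a2_def c_def by auto
  qed
  also have "\<dots> = max 0 (min t a1 - a0) * c - max 0 (min t a2 - a1) * c"
    by (subst integral_diff[OF int_ind_integrable int_ind_integrable]) (simp only: int_ind_const a0 a1)
  also have "\<dots> = max 0 (min (c*t) (c*a1) - c*a0) - max 0 (min (c*t) (c*a2) - c*a1)"
    using c by (simp only: scale_mm)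
  also have "\<dots> = tentv (c*t) m"
    unfolding ca0 ca1 ca2 tentv_def by (rule tent_lin)
  finally show ?thesis by (simp add: c_def)
qed



lemma schauder_m1[simp]: "schauder (-1) m t = 1" by (simp add: schauder_def)

lemma schauder_p0: "p \<ge> 1 \<Longrightarrow> schauder (int p) 0 t = 0"
proof -
  assume "p \<ge> 1"
  then have "haar p 0 = (\<lambda>_. 0)" by (auto simp: haar_def fun_eq_iff)
  then show ?thesis by (simp add: schauder_def)
qed

lemma schauder_00: "0 \<le> t \<Longrightarrow> schauder 0 0 t = t"
proof -
  assume t: "0 \<le> t"
  have "haar 0 0 = (\<lambda>_. 1)" by (auto simp: haar_def fun_eq_iff)
  then show ?thesis using t by (simp add: schauder_def integral_const_real)
qed

lemma tentv_nonneg: "0 \<le> tentv y m" by (simp add: tentv_def)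
lemma tentv_le: "tentv y m \<le> 1/2" by (auto simp: tentv_def max_def)

lemma tentv_unique: "tentv y m > 0 \<Longrightarrow> tentv y m' > 0 \<Longrightarrow> m = m'"
proof (rule ccontr)
  assume a: "tentv y m > 0" "tentv y m' > 0" "m \<noteq> m'"
  have "\<bar>y - (real m - 1/2)\<bar> < 1/2" "\<bar>y - (real m' - 1/2)\<bar> < 1/2"
    using a(1,2) by (auto simp: tentv_def max_def split: if_splits)
  moreover have "real m + 1 \<le> real m' \<or> real m' + 1 \<le> real m" using a(3) by linarith
  ultimately show False by linarith
qed

lemma tentv_nat: "tentv (real j) m = 0"
proof -
  have "real m \<le> real j \<or> real j + 1 \<le> real m"
  proof (cases "m \<le> j")
    case False
    then have "Suc j \<le> m" by simp
    then have "real (Suc j) \<le> real m" by (simp only: of_nat_le_iff)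
    then show ?thesis by simp
  qed simp
  then have "\<bar>real j - (real m - 1/2)\<bar> \<ge> 1/2" by (cases "real m \<le> real j") (auto simp: abs_if)
  then show ?thesis by (simp add: tentv_def)
qed

definition aff :: "(real \<Rightarrow> 'a::real_vector) \<Rightarrow> real \<Rightarrow> real \<Rightarrow> bool" where
  "aff g a b \<longleftrightarrow> (\<forall>u. a \<le> u \<and> u \<le> b \<longrightarrow> g u = g a + ((u - a) / (b - a)) *\<^sub>R (g b - g a))"

lemma affD: "aff g a b \<Longrightarrow> a \<le> u \<Longrightarrow> u \<le> b \<Longrightarrow> g u = g a + ((u - a) / (b - a)) *\<^sub>R (g b - g a)"
  unfolding aff_def by blast

lemma aff_cong: "(\<And>u. a \<le> u \<Longrightarrow> u \<le> b \<Longrightarrow> g u = h u) \<Longrightarrow> a \<le> b \<Longrightarrow> aff g a b \<longleftrightarrow> aff h a b"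
  unfolding aff_def by auto

lemma aff_const: "aff (\<lambda>_. c) a b" by (simp add: aff_def)

lemma aff_lin: "a < b \<Longrightarrow> aff (\<lambda>u. \<alpha> * u + \<beta>) a b"
proof (unfold aff_def, intro allI impI)
  fix u assume ab: "a < b"
  have "((u - a) / (b - a)) * (\<alpha> * b + \<beta> - (\<alpha> * a + \<beta>)) = ((u - a) / (b - a)) * (b - a) * \<alpha>"
    by (simp add: algebra_simps)
  also have "\<dots> = (u - a) * \<alpha>" using ab by simp
  finally show "\<alpha> * u + \<beta> = \<alpha> * a + \<beta> + ((u - a) / (b - a)) *\<^sub>R (\<alpha> * b + \<beta> - (\<alpha> * a + \<beta>))"
    by (simp add: algebra_simps)
qed

lemma aff_sum: "finite S \<Longrightarrow> (\<And>m. m \<in> S \<Longrightarrow> aff (g m) a b) \<Longrightarrow> aff (\<lambda>u. \<Sum>m\<in>S. g m u) a b"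
proof (unfold aff_def[of "\<lambda>u. \<Sum>m\<in>S. g m u"], intro allI impI)
  fix u assume h: "\<And>m. m \<in> S \<Longrightarrow> aff (g m) a b" and u: "a \<le> u \<and> u \<le> b"
  have "(\<Sum>m\<in>S. g m u) = (\<Sum>m\<in>S. g m a + ((u - a) / (b - a)) *\<^sub>R (g m b - g m a))"
    by (rule sum.cong[OF refl], rule affD[OF h]) (use u in auto)
  also have "\<dots> = (\<Sum>m\<in>S. g m a) + ((u - a) / (b - a)) *\<^sub>R ((\<Sum>m\<in>S. g m b) - (\<Sum>m\<in>S. g m a))"
    by (simp add: sum.distrib scaleR_diff_right scaleR_sum_right sum_subtractf)
  finally show "(\<Sum>m\<in>S. g m u) = (\<Sum>m\<in>S. g m a) + ((u - a) / (b - a)) *\<^sub>R ((\<Sum>m\<in>S. g m b) - (\<Sum>m\<in>S. g m a))" .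
qed

lemma aff_scaleR: "aff g a b \<Longrightarrow> aff (\<lambda>u. g u *\<^sub>R x) a b"
proof (unfold aff_def[of "\<lambda>u. g u *\<^sub>R x"], intro allI impI)
  fix u assume h: "aff g a b" and u: "a \<le> u \<and> u \<le> b"
  define L where "L = (u - a) / (b - a)"
  have e: "g u = g a + L * (g b - g a)" using affD[OF h, of u] u by (simp add: L_def)
  have "g u *\<^sub>R x = g a *\<^sub>R x + L *\<^sub>R (g b *\<^sub>R x - g a *\<^sub>R x)"
    unfolding e by (simp add: scaleR_add_left scaleR_diff_left scaleR_diff_right right_diff_distrib)
  then show "g u *\<^sub>R x = g a *\<^sub>R x + ((u - a) / (b - a)) *\<^sub>R (g b *\<^sub>R x - g a *\<^sub>R x)"
    by (simp add: L_def)
qed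

lemma aff_comp: "aff h (c*a) (c*b) \<Longrightarrow> 0 < c \<Longrightarrow> aff (\<lambda>t. h (c*t)) a b"
proof (unfold aff_def, intro allI impI)
  fix u assume h: "\<forall>u. c * a \<le> u \<and> u \<le> c * b \<longrightarrow> h u = h (c * a) + ((u - c * a) / (c * b - c * a)) *\<^sub>R (h (c * b) - h (c * a))"
    and c: "0 < c" and u: "a \<le> u \<and> u \<le> b"
  have "c*a \<le> c*u \<and> c*u \<le> c*b" using c u by simp
  then have "h (c*u) = h (c * a) + ((c*u - c * a) / (c * b - c * a)) *\<^sub>R (h (c * b) - h (c * a))" using h by blast
  moreover have "(c*u - c * a) / (c * b - c * a) = (u - a) / (b - a)"
  proof -
    have "c*u - c*a = c*(u-a)" "c*b - c*a = c*(b-a)" by (simp_all add: algebra_simps)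
    then show ?thesis using c by simp
  qed
  ultimately show "h (c*u) = h (c * a) + ((u - a) / (b - a)) *\<^sub>R (h (c * b) - h (c * a))" by simp
qed

lemma aff_diff: "aff g a b \<Longrightarrow> a \<le> c \<Longrightarrow> c \<le> d \<Longrightarrow> d \<le> b \<Longrightarrow>
   g d - g c = ((d - c) / (b - a)) *\<^sub>R (g b - g a)"
proof -
  assume h: "aff g a b" "a \<le> c" "c \<le> d" "d \<le> b"
  have 1: "g c = g a + ((c - a) / (b - a)) *\<^sub>R (g b - g a)" using h by (intro affD) auto
  have 2: "g d = g a + ((d - a) / (b - a)) *\<^sub>R (g b - g a)" using h by (intro affD) auto
  have "g d - g c = ((d - a) / (b - a) - (c - a) / (b - a)) *\<^sub>R (g b - g a)"
    unfolding 1 2 by (simp add: scaleR_diff_left)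
  also have "(d - a) / (b - a) - (c - a) / (b - a) = (d - c) / (b - a)" by (simp add: diff_divide_distrib)
  finally show ?thesis .
qed

lemma vec_mid: "2*m = l1 + l2 \<Longrightarrow> 2 *\<^sub>R (x + m *\<^sub>R D) = (x + l1 *\<^sub>R D) + (x + l2 *\<^sub>R (D::'a::real_vector))"
proof -
  assume h: "2*m = l1 + l2"
  have "2 *\<^sub>R (x + m *\<^sub>R D) = 2 *\<^sub>R x + (2*m) *\<^sub>R D" by (simp add: scaleR_add_right)
  also have "\<dots> = 2 *\<^sub>R x + (l1 + l2) *\<^sub>R D" by (simp only: h)
  also have "\<dots> = (x + l1 *\<^sub>R D) + (x + l2 *\<^sub>R D)" by (simp add: scaleR_add_left scaleR_2)
  finally show ?thesis .
qed

lemma aff_mid: "aff g a b \<Longrightarrow> a \<le> c \<Longrightarrow> c \<le> d \<Longrightarrow> d \<le> b \<Longrightarrow>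
   2 *\<^sub>R g ((c + d)/2) = g c + g d"
proof -
  assume h: "aff g a b" "a \<le> c" "c \<le> d" "d \<le> b"
  have 1: "g c = g a + ((c - a) / (b - a)) *\<^sub>R (g b - g a)" using h by (intro affD) auto
  have 2: "g d = g a + ((d - a) / (b - a)) *\<^sub>R (g b - g a)" using h by (intro affD) auto
  have 3: "g ((c+d)/2) = g a + (((c+d)/2 - a) / (b - a)) *\<^sub>R (g b - g a)" using h by (intro affD) auto
  have e: "2 * (((c+d)/2 - a) / (b - a)) = (c - a) / (b - a) + (d - a) / (b - a)"
  proof -
    have "2 * (((c+d)/2 - a) / (b - a)) = (2 * ((c+d)/2 - a)) / (b - a)" by simp
    also have "2 * ((c+d)/2 - a) = (c - a) + (d - a)" by simp
    finally show ?thesis by (simp only: add_divide_distrib)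
  qed
  show ?thesis unfolding 1 2 3 by (rule vec_mid[OF e])
qed



lemma tentv_aff:
  assumes m: "m \<ge> 1"
  shows "aff (\<lambda>y. tentv y m) (real k/2) ((real k+1)/2)"
proof -
  have ab: "real k/2 < (real k+1)/2" by simp
  have "k + 3 \<le> 2*m \<or> k = 2*m - 2 \<or> k = 2*m - 1 \<or> 2*m \<le> k" by arith
  then consider "real k + 3 \<le> 2*real m" | "real k = 2*real m - 2" | "real k = 2*real m - 1" | "2*real m \<le> real k"
  proof (elim disjE)
    assume "k + 3 \<le> 2*m" then have "real (k+3) \<le> real (2*m)" by (simp only: of_nat_le_iff)
    then show thesis using that by simp
  next
    assume "k = 2*m - 2" then have "real k = real (2*m) - 2" using m by (simp add: of_nat_diff)
    then show thesis using that by simp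
  next
    assume "k = 2*m - 1" then have "real k = real (2*m) - 1" using m by (simp add: of_nat_diff)
    then show thesis using that by simp
  next
    assume "2*m \<le> k" then have "real (2*m) \<le> real k" by (simp only: of_nat_le_iff)
    then show thesis using that by simp
  qed
  then show ?thesis
  proof cases
    case 1
    have "aff (\<lambda>y. tentv y m) (real k/2) ((real k+1)/2) \<longleftrightarrow> aff (\<lambda>_. 0::real) (real k/2) ((real k+1)/2)"
      by (rule aff_cong) (use 1 in \<open>auto simp: tentv_def max_def abs_if\<close>)
    then show ?thesis by (simp add: aff_const)
  next
    case 2
    have "aff (\<lambda>y. tentv y m) (real k/2) ((real k+1)/2) \<longleftrightarrow> aff (\<lambda>u. 1 * u + (1 - real m)) (real k/2) ((real k+1)/2)"
      by (rule aff_cong) (use 2 in \<open>auto simp: tentv_def max_def abs_if\<close>)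
    then show ?thesis using aff_lin[OF ab] by blast
  next
    case 3
    have "aff (\<lambda>y. tentv y m) (real k/2) ((real k+1)/2) \<longleftrightarrow> aff (\<lambda>u. (-1) * u + real m) (real k/2) ((real k+1)/2)"
      by (rule aff_cong) (use 3 in \<open>auto simp: tentv_def max_def abs_if\<close>)
    then show ?thesis using aff_lin[OF ab] by blast
  next
    case 4
    have "aff (\<lambda>y. tentv y m) (real k/2) ((real k+1)/2) \<longleftrightarrow> aff (\<lambda>_. 0::real) (real k/2) ((real k+1)/2)"
      by (rule aff_cong) (use 4 in \<open>auto simp: tentv_def max_def abs_if\<close>)
    then show ?thesis by (simp add: aff_const)
  qed
qed

lemma schauder_aff:
  "aff (schauder (int p) m) (real k / 2^(p+1)) ((real k + 1) / 2^(p+1))"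
proof -
  define a where "a = real k / 2^(p+1)"
  define b where "b = (real k + 1) / 2^(p+1)"
  have a0: "0 \<le> a" by (simp add: a_def)
  have ab: "a < b" by (simp add: a_def b_def divide_strict_right_mono)
  show ?thesis
  proof (cases "m \<ge> 1")
    case True
    have c: "(0::real) < 2^p" by simp
    have ca: "2^p * a = real k / 2" and cb: "2^p * b = (real k + 1) / 2"
      by (simp_all add: a_def b_def)
    have "aff (\<lambda>t. tentv (2^p * t) m) a b"
      by (rule aff_comp[OF _ c]) (simp only: ca cb tentv_aff[OF True])
    moreover have "aff (schauder (int p) m) a b \<longleftrightarrow> aff (\<lambda>t. tentv (2^p * t) m) a b"
      by (rule aff_cong) (use ab in \<open>simp_all add: schauder_tent[OF True]\<close>)
    ultimately show ?thesis by (simp add: a_def b_def)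
  next
    case False
    then have m0: "m = 0" by simp
    show ?thesis
    proof (cases "p = 0")
      case True
      have "aff (schauder (int p) m) a b \<longleftrightarrow> aff (\<lambda>u. 1 * u + 0) a b"
        by (rule aff_cong) (use ab a0 True m0 in \<open>simp_all add: schauder_00\<close>)
      then show ?thesis using aff_lin[OF ab, of 1 0] by (simp add: a_def b_def)
    next
      case False
      have "aff (schauder (int p) m) a b \<longleftrightarrow> aff (\<lambda>_. 0::real) a b"
        by (rule aff_cong) (use ab False m0 in \<open>simp_all add: schauder_p0\<close>)
      then show ?thesis using aff_const by (simp add: a_def b_def)
    qed
  qed
qed

lemma block_aff:
  "aff (schauder_block (int p) f) (real k / 2^(p+1)) ((real k + 1) / 2^(p+1))"
proof -
  have "aff (\<lambda>t. \<Sum>m\<in>schauder_idx (int p). schauder (int p) m t *\<^sub>R schauder_coeff f (int p) m)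
     (real k / 2^(p+1)) ((real k + 1) / 2^(p+1))"
    by (rule aff_sum, simp add: schauder_idx_def, rule aff_scaleR, rule schauder_aff)
  then show ?thesis unfolding schauder_block_def[abs_def] .
qed

lemma block_m1: "schauder_block (-1) f t = f 0"
  by (simp add: schauder_block_def schauder_idx_def schauder_coeff_def)



lemma schauder_abs_le1:
  assumes i: "i \<ge> -1" and t: "t \<in> {0..1}"
  shows "\<bar>schauder i m t\<bar> \<le> 1"
proof (cases "i = -1")
  case False
  have "0 \<le> i" using i False by simp
  then obtain i' where i': "i = int i'" using nonneg_int_cases by blast
  show ?thesis
  proof (cases "m \<ge> 1")
    case True
    have "0 \<le> tentv (2^i' * t) m" "tentv (2^i' * t) m \<le> 1/2" by (rule tentv_nonneg, rule tentv_le)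
    then show ?thesis unfolding i' schauder_tent[OF True] by (simp add: abs_le_iff)
  next
    case False
    then have m0: "m = 0" by simp
    show ?thesis
    proof (cases "i' = 0")
      case True then show ?thesis using t by (simp add: i' m0 schauder_00)
    next
      case False then show ?thesis by (simp add: i' m0 schauder_p0)
    qed
  qed
qed simp

lemma block_bound_crude:
  assumes i: "i \<ge> -1" and t: "t \<in> {0..1}"
  shows "norm (schauder_block i f t) \<le> (\<Sum>m\<in>schauder_idx i. norm (schauder_coeff f i m))"
proof -
  have "norm (schauder_block i f t) \<le> (\<Sum>m\<in>schauder_idx i. norm (schauder i m t *\<^sub>R schauder_coeff f i m))"
    unfolding schauder_block_def by (rule norm_sum)
  also have "\<dots> \<le> (\<Sum>m\<in>schauder_idx i. norm (schauder_coeff f i m))"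
  proof (rule sum_mono)
    fix m
    have "\<bar>schauder i m t\<bar> * norm (schauder_coeff f i m) \<le> 1 * norm (schauder_coeff f i m)"
      by (rule mult_right_mono[OF schauder_abs_le1[OF i t]]) simp
    then show "norm (schauder i m t *\<^sub>R schauder_coeff f i m) \<le> norm (schauder_coeff f i m)" by simp
  qed
  finally show ?thesis .
qed

lemma block_bdd:
  assumes i: "i \<ge> -1"
  shows "bdd_above ((\<lambda>t. norm (schauder_block i f t)) ` {0..1})"
  using block_bound_crude[OF i] by (intro bdd_aboveI2) 

lemma block_le_sup:
  assumes i: "i \<ge> -1" and t: "t \<in> {0..1}"
  shows "norm (schauder_block i f t) \<le> supnorm01 (schauder_block i f)"
  unfolding supnorm01_def by (rule cSUP_upper[OF t block_bdd[OF i]])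

lemma sup_nonneg:
  assumes i: "i \<ge> -1"
  shows "0 \<le> supnorm01 (schauder_block i f)"
  using block_le_sup[OF i, of 0 f] norm_ge_zero[of "schauder_block i f 0"] by (simp del: norm_ge_zero)

lemma atmost1:
  fixes g :: "nat \<Rightarrow> real"
  assumes S: "finite S" and g: "\<And>m. m \<in> S \<Longrightarrow> 0 \<le> g m \<and> g m \<le> B" and B: "0 \<le> B"
    and u: "\<And>m m'. m \<in> S \<Longrightarrow> m' \<in> S \<Longrightarrow> g m > 0 \<Longrightarrow> g m' > 0 \<Longrightarrow> m = m'"
  shows "sum g S \<le> B"
proof (cases "\<exists>m\<in>S. g m > 0")
  case True
  then obtain m0 where m0: "m0 \<in> S" "g m0 > 0" by blast
  have "sum g S = g m0 + sum g (S - {m0})" by (rule sum.remove[OF S m0(1)])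
  also have "sum g (S - {m0}) = 0"
  proof (rule sum.neutral, intro ballI)
    fix m assume m: "m \<in> S - {m0}"
    then have "\<not> g m > 0" using u[of m m0] m0 by auto
    then show "g m = 0" using g[of m] m by auto
  qed
  finally show ?thesis using g[OF m0(1)] by simp
next
  case False
  then have "sum g S = 0" using g by (intro sum.neutral) force
  then show ?thesis using B by simp
qed

lemma tent_sum_le: "(\<Sum>m\<in>{1..N}. tentv y m) \<le> 1/2"
  by (rule atmost1, simp, intro conjI tentv_nonneg tentv_le, simp, rule tentv_unique, assumption+)

lemma block_bound_sharp:
  assumes t: "t \<in> {0..1}" and M: "\<And>m. m \<in> schauder_idx (int i) \<Longrightarrow> norm (schauder_coeff f (int i) m) \<le> M"
  shows "norm (schauder_block (int i) f t) \<le> 2 * M"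
proof -
  define N :: nat where "N = 2^i"
  have idx: "schauder_idx (int i) = insert 0 {1..N}" by (auto simp: schauder_idx_def N_def)
  have M0: "0 \<le> M" using M[of 0] norm_ge_zero[of "schauder_coeff f (int i) 0"] by (simp add: schauder_idx_def del: norm_ge_zero)
  have "schauder_block (int i) f t = schauder (int i) 0 t *\<^sub>R schauder_coeff f (int i) 0
      + (\<Sum>m\<in>{1..N}. schauder (int i) m t *\<^sub>R schauder_coeff f (int i) m)"
    unfolding schauder_block_def idx by (simp add: sum.insert)
  also have "norm \<dots> \<le> norm (schauder (int i) 0 t *\<^sub>R schauder_coeff f (int i) 0)
      + norm (\<Sum>m\<in>{1..N}. schauder (int i) m t *\<^sub>R schauder_coeff f (int i) m)"
    by (rule norm_triangle_ineq)
  also have "norm (schauder (int i) 0 t *\<^sub>R schauder_coeff f (int i) 0) \<le> 1 * M"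
    using mult_mono[OF schauder_abs_le1[OF _ t, of "int i" 0] M[of 0]]
    by (simp add: schauder_idx_def)
  also have "norm (\<Sum>m\<in>{1..N}. schauder (int i) m t *\<^sub>R schauder_coeff f (int i) m)
      \<le> (\<Sum>m\<in>{1..N}. tentv (2^i * t) m * M)"
  proof -
    have "norm (\<Sum>m\<in>{1..N}. schauder (int i) m t *\<^sub>R schauder_coeff f (int i) m)
        \<le> (\<Sum>m\<in>{1..N}. norm (schauder (int i) m t *\<^sub>R schauder_coeff f (int i) m))"
      by (rule norm_sum)
    also have "\<dots> \<le> (\<Sum>m\<in>{1..N}. tentv (2^i * t) m * M)"
    proof (rule sum_mono)
      fix m assume m: "m \<in> {1..N}"
      then have m1: "m \<ge> 1" by simp
      have "m \<in> schauder_idx (int i)" using m by (simp add: idx)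
      then show "norm (schauder (int i) m t *\<^sub>R schauder_coeff f (int i) m) \<le> tentv (2^i * t) m * M"
        using M schauder_tent[OF m1] tentv_nonneg
        by (simp add: mult_left_mono)
    qed
    finally show ?thesis .
  qed
  also have "(\<Sum>m\<in>{1..N}. tentv (2^i * t) m * M) = (\<Sum>m\<in>{1..N}. tentv (2^i * t) m) * M"
    by (simp add: sum_distrib_right)
  also have "\<dots> \<le> 1/2 * M" by (rule mult_right_mono[OF tent_sum_le M0])
  finally show ?thesis using M0 by simp
qed



lemma block_vanish:
  assumes p: "p \<ge> 1"
  shows "schauder_block (int p) f (real j / 2^p) = 0"
  unfolding schauder_block_def
proof (rule sum.neutral, intro ballI)
  fix m assume "m \<in> schauder_idx (int p)"
  show "schauder (int p) m (real j / 2^p) *\<^sub>R schauder_coeff f (int p) m = 0"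
  proof (cases "m \<ge> 1")
    case True
    then show ?thesis by (simp add: schauder_tent tentv_nat)
  next
    case False
    then have "m = 0" by simp
    then show ?thesis using p by (simp add: schauder_p0)
  qed
qed

lemma block0_vanish0: "schauder_block 0 f 0 = 0"
  unfolding schauder_block_def
proof (rule sum.neutral, intro ballI)
  fix m assume "m \<in> schauder_idx 0"
  show "schauder 0 m 0 *\<^sub>R schauder_coeff f 0 m = 0"
  proof (cases "m \<ge> 1")
    case True
    then show ?thesis using schauder_tent[OF True, of 0 0] tentv_nat[of 0 m] by simp
  next
    case False
    then have "m = 0" by simp
    then show ?thesis using schauder_00[of 0] by simp
  qed
qed

lemma real_pow2_le: "m \<le> 2^i \<Longrightarrow> real m \<le> 2^i"
  by (metis of_nat_le_iff of_nat_numeral of_nat_power)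

lemma grid_refine:
  assumes "i < p"
  shows "real j / 2^(i+1) = real (j * 2^(p - (i+1))) / (2::real)^p"
proof -
  obtain d where d: "p = Suc i + d" using assms less_iff_Suc_add by blast
  have "(2::real)^p = 2^(i+1) * 2^(p - (i+1))" unfolding d by (simp add: power_add)
  then show ?thesis by simp
qed

lemma block_grid_vanish:
  assumes ip: "int i < int p"
  shows "schauder_block (int p) f (real j / 2^(i+1)) = 0"
proof -
  have p1: "p \<ge> 1" using ip by simp
  have e: "real j / 2^(i+1) = real (j * 2^(p - (i+1))) / (2::real)^p" using ip by (intro grid_refine) simp
  show ?thesis by (simp only: e block_vanish[OF p1])
qed

lemma block_zero_at0:
  assumes "p \<ge> 0"
  shows "schauder_block p f 0 = 0"
proof -
  obtain p' where p': "p = int p'" using assms nonneg_int_cases by blast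
  show ?thesis
  proof (cases "p' = 0")
    case True then show ?thesis using block0_vanish0 by (simp add: p')
  next
    case False then show ?thesis using block_vanish[of p' f 0] by (simp add: p')
  qed
qed

lemma coeff_zero:
  assumes i: "i \<ge> -1" and P0: "P 0 = 0" and Pg: "\<And>i' j. i = int i' \<Longrightarrow> P (real j / 2^(i'+1)) = 0"
  shows "schauder_coeff P i m = 0"
proof (cases "i = -1")
  case True then show ?thesis using P0 by (simp add: schauder_coeff_def)
next
  case False
  have "0 \<le> i" using i False by simp
  then obtain i' where i': "i = int i'" using nonneg_int_cases by blast
  note G = Pg[OF i']
  show ?thesis
  proof (cases "m = 0")
    case True
    show ?thesis
    proof (cases "i' = 0")
      case True
      have "P 1 = 0" using G[of 2] True by simp
      then show ?thesis using \<open>m = 0\<close> True P0 by (simp add: schauder_coeff_def i')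
    qed (use True in \<open>simp add: schauder_coeff_def i'\<close>)
  next
    case False
    have e0: "tt0 i' m = real (2*(m-1)) / 2^(i'+1)" using False unfolding tt0_def by (simp add: of_nat_diff field_simps)
    have e1: "tt1 i' m = real (2*m-1) / 2^(i'+1)" using False unfolding tt1_def by (simp add: of_nat_diff field_simps)
    have e2: "tt2 i' m = real (2*m) / 2^(i'+1)" unfolding tt2_def by simp
    have "P (tt0 i' m) = 0" unfolding e0 by (rule G)
    moreover have "P (tt1 i' m) = 0" unfolding e1 by (rule G)
    moreover have "P (tt2 i' m) = 0" unfolding e2 by (rule G)
    ultimately show ?thesis using False by (simp add: schauder_coeff_def i')
  qed
qed

lemma block_zero_coeffs:
  "(\<And>m. schauder_coeff P i m = 0) \<Longrightarrow> schauder_block i P t = 0"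
  by (simp add: schauder_block_def)

lemma part2:
  fixes v :: "real \<Rightarrow> ('d::euclidean_space \<Rightarrow>\<^sub>L 'n::euclidean_space)" and w :: "real \<Rightarrow> 'd"
  assumes i: "i \<ge> -1" and pq: "p > i \<or> q > i"
  shows "schauder_block i (\<lambda>t. blinfun_apply (schauder_block p v t) (schauder_block q w t)) t = 0"
proof (rule block_zero_coeffs, rule coeff_zero[OF i])
  have V: "schauder_block p v x = 0" if "p > i" "x = 0 \<or> (\<exists>i' j. i = int i' \<and> x = real j / 2^(i'+1))" for x
  proof -
    have "p \<ge> 0" using that i by simp
    then obtain p' where p': "p = int p'" using nonneg_int_cases by blast
    show ?thesis using that(2)
    proof
      assume "x = 0" then show ?thesis using block_zero_at0[of p v] p' by simp
    next
      assume "\<exists>i' j. i = int i' \<and> x = real j / 2^(i'+1)"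
      then obtain i' j where "i = int i'" "x = real j / 2^(i'+1)" by blast
      then show ?thesis using block_grid_vanish[of i' p' v j] that(1) p' by simp
    qed
  qed
  have W: "schauder_block q w x = 0" if "q > i" "x = 0 \<or> (\<exists>i' j. i = int i' \<and> x = real j / 2^(i'+1))" for x
  proof -
    have "q \<ge> 0" using that i by simp
    then obtain q' where q': "q = int q'" using nonneg_int_cases by blast
    show ?thesis using that(2)
    proof
      assume "x = 0" then show ?thesis using block_zero_at0[of q w] q' by simp
    next
      assume "\<exists>i' j. i = int i' \<and> x = real j / 2^(i'+1)"
      then obtain i' j where "i = int i'" "x = real j / 2^(i'+1)" by blast
      then show ?thesis using block_grid_vanish[of i' q' w j] that(1) q' by simp
    qed
  qed
  have Z: "blinfun_apply (schauder_block p v x) (schauder_block q w x) = 0"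
    if "x = 0 \<or> (\<exists>i' j. i = int i' \<and> x = real j / 2^(i'+1))" for x
    using pq V[OF _ that] W[OF _ that] by auto
  show "blinfun_apply (schauder_block p v 0) (schauder_block q w 0) = 0" by (rule Z) simp
  fix i' j assume "i = int i'"
  then show "blinfun_apply (schauder_block p v (real j / 2^(i'+1))) (schauder_block q w (real j / 2^(i'+1))) = 0"
    by (intro Z) blast
qed



lemma tt_range:
  assumes "1 \<le> m" "m \<le> 2^i"
  shows "tt0 i m \<in> {0..1}" "tt1 i m \<in> {0..1}" "tt2 i m \<in> {0..1}"
proof -
  have m: "real m \<le> 2^i" "1 \<le> real m" using real_pow2_le[OF assms(2)] assms(1) by auto
  have dl: "\<And>x N. 0 < N \<Longrightarrow> x \<le> N \<Longrightarrow> x / N \<le> (1::real)" by simp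
  have p2: "(2::real)^(i+1) = 2 * 2^i" by simp
  have "real m - 1 \<le> 2^i" using m(1) by linarith
  then have a: "(real m - 1) / 2^i \<le> 1" by (intro dl) simp_all
  show "tt0 i m \<in> {0..1}" unfolding tt0_def atLeastAtMost_iff
    by (intro conjI divide_nonneg_pos a) (use m in simp_all)
  have b: "real m / 2^i \<le> 1" using m(1) by (intro dl) simp_all
  show "tt2 i m \<in> {0..1}" unfolding tt2_def atLeastAtMost_iff
    by (intro conjI divide_nonneg_pos b) (use m in simp_all)
  have "2 * real m - 1 \<le> 2^(i+1)" using m(1) p2 by linarith
  then have c: "(2 * real m - 1) / 2^(i+1) \<le> 1" by (intro dl) simp_all
  show "tt1 i m \<in> {0..1}" unfolding tt1_def atLeastAtMost_iff
    by (intro conjI divide_nonneg_pos c) (use m in simp_all)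
qed

lemma coeff_crude:
  assumes K: "\<And>s. s \<in> {0..1} \<Longrightarrow> norm (P s) \<le> K" and m: "m \<in> schauder_idx (int i)"
  shows "norm (schauder_coeff P (int i) m) \<le> 4*K"
proof -
  have K0: "0 \<le> K" using K[of 0] norm_ge_zero[of "P 0"] by (simp del: norm_ge_zero)
  show ?thesis
  proof (cases "m = 0")
    case True
    show ?thesis
    proof (cases "i = 0")
      case True
      have "norm (P 1 - P 0) \<le> norm (P 1) + norm (P 0)" by (rule norm_triangle_ineq4)
      also have "\<dots> \<le> K + K" using K[of 1] K[of 0] by simp
      finally show ?thesis using \<open>m = 0\<close> True K0 by (simp add: schauder_coeff_def)
    qed (use True K0 in \<open>simp add: schauder_coeff_def\<close>)
  next
    case False
    then have m1: "1 \<le> m" "m \<le> 2^i" using m by (auto simp: schauder_idx_def)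
    note R = tt_range[OF m1]
    have "norm (2 *\<^sub>R P (tt1 i m) - P (tt0 i m) - P (tt2 i m))
        \<le> norm (2 *\<^sub>R P (tt1 i m) - P (tt0 i m)) + norm (P (tt2 i m))" by (rule norm_triangle_ineq4)
    also have "\<dots> \<le> (norm (2 *\<^sub>R P (tt1 i m)) + norm (P (tt0 i m))) + norm (P (tt2 i m))"
      using norm_triangle_ineq4 by (intro add_right_mono) blast
    also have "\<dots> \<le> (2 * K + K) + K" using K[OF R(1)] K[OF R(2)] K[OF R(3)] by simp
    finally show ?thesis using False by (simp add: schauder_coeff_def)
  qed
qed

lemma bilin_second_diff:
  fixes V0 V1 V2 :: "'d::real_normed_vector \<Rightarrow>\<^sub>L 'n::real_normed_vector"
  assumes hV: "2 *\<^sub>R V1 = V0 + V2" and hW: "2 *\<^sub>R W1 = W0 + W2"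
  shows "2 *\<^sub>R blinfun_apply V1 W1 - blinfun_apply V0 W0 - blinfun_apply V2 W2
        = - ((1/2) *\<^sub>R blinfun_apply (V2 - V0) (W2 - W0))"
proof -
  have V1: "V1 = (1/2) *\<^sub>R (V0 + V2)" using arg_cong[OF hV, of "\<lambda>x. (1/2) *\<^sub>R x"] by simp
  have W1: "W1 = (1/2) *\<^sub>R (W0 + W2)" using arg_cong[OF hW, of "\<lambda>x. (1/2) *\<^sub>R x"] by simp
  have h: "(1/2) *\<^sub>R x + (1/2) *\<^sub>R x = x" for x :: 'n by (simp flip: scaleR_add_left)
  have h2: "(1/2) *\<^sub>R x + ((1/2) *\<^sub>R x + ((1/2) *\<^sub>R y + (1/2) *\<^sub>R y)) = x + y" for x y :: 'n
    by (metis add.assoc h)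
  show ?thesis unfolding V1 W1
    by (simp add: blinfun.add_left blinfun.add_right blinfun.diff_left blinfun.diff_right
        blinfun.scaleR_left blinfun.scaleR_right algebra_simps h2)
qed

lemma piece_exists:
  assumes pi: "p < i" and m: "1 \<le> m" "m \<le> 2^i"
  obtains k where "real k / 2^(p+1) \<le> tt0 i m" "tt2 i m \<le> (real k + 1) / 2^(p+1)"
    "(real k + 1) / 2^(p+1) \<le> 1"
proof -
  define d :: nat where "d = 2^(i - (p+1))"
  have d0: "d > 0" by (simp add: d_def)
  obtain e where e: "i = Suc p + e" using pi less_iff_Suc_add by blast
  have pd: "(2::nat)^i = 2^(p+1) * d" unfolding d_def e by (simp add: power_add)
  have pdr: "(2::real)^i = 2^(p+1) * real d"
    using arg_cong[OF pd, of real] by simp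
  define k where "k = (m - 1) div d"
  have eq: "k * d + (m - 1) mod d = m - 1" unfolding k_def by (rule div_mult_mod_eq)
  have k1: "k * d \<le> m - 1" using eq by arith
  have k2: "m \<le> (k + 1) * d"
  proof -
    have "m - 1 = k * d + (m - 1) mod d" using eq by simp
    moreover have "(m - 1) mod d < d" using d0 by simp
    ultimately show ?thesis using m by (simp add: algebra_simps)
  qed
  have k3: "k + 1 \<le> 2^(p+1)"
  proof -
    have "k * d < 2^(p+1) * d" using k1 m pd by linarith
    then show ?thesis using d0 by simp
  qed
  have r1: "real (k * d) \<le> real m - 1" using k1 m by linarith
  have r2: "real m \<le> real ((k + 1) * d)" using k2 by (simp only: of_nat_le_iff)
  have r3: "real k + 1 \<le> 2^(p+1)" using real_pow2_le[OF k3] by simp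
  show ?thesis
  proof
    have "real k / 2^(p+1) = real (k*d) / 2^i" using d0 by (simp add: pdr)
    also have "\<dots> \<le> tt0 i m" unfolding tt0_def by (rule divide_right_mono[OF r1]) simp
    finally show "real k / 2^(p+1) \<le> tt0 i m" .
    have "tt2 i m \<le> real ((k + 1) * d) / 2^i" unfolding tt2_def by (rule divide_right_mono[OF r2]) simp
    also have "\<dots> = (real k + 1) / 2^(p+1)" using d0 by (simp add: pdr field_simps)
    finally show "tt2 i m \<le> (real k + 1) / 2^(p+1)" .
    show "(real k + 1) / 2^(p+1) \<le> 1" using r3 by simp
  qed
qed



lemma powr_int_nat: "(2::real) powr (real_of_int (int a + 2 - int b)) = 2^(a+2) / 2^b"
proof -
  have "real_of_int (int a + 2 - int b) = real (a+2) - real b" by simp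
  moreover have "2 powr real (a+2) = (2::real)^(a+2)" by (rule powr_realpow) simp
  moreover have "2 powr real b = (2::real)^b" by (rule powr_realpow) simp
  ultimately show ?thesis by (simp only: powr_diff)
qed

lemma block_diff_bound:
  fixes f :: "real \<Rightarrow> 'a::real_normed_vector"
  assumes p: "p \<ge> -1" "p < int i" and m: "1 \<le> m" "m \<le> 2^i"
  shows "2 *\<^sub>R schauder_block p f (tt1 i m) = schauder_block p f (tt0 i m) + schauder_block p f (tt2 i m)"
    and "norm (schauder_block p f (tt2 i m) - schauder_block p f (tt0 i m))
          \<le> 2 powr (real_of_int (p + 2 - int i)) * supnorm01 (schauder_block p f)"
proof -
  note R = tt_range[OF m]
  have A0: "0 \<le> supnorm01 (schauder_block p f)" by (rule sup_nonneg[OF p(1)])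
  have mid: "tt1 i m = (tt0 i m + tt2 i m) / 2" by (simp add: tt0_def tt1_def tt2_def field_simps)
  have t02: "tt0 i m \<le> tt2 i m" by (simp add: tt0_def tt2_def divide_right_mono)
  have "2 *\<^sub>R schauder_block p f (tt1 i m) = schauder_block p f (tt0 i m) + schauder_block p f (tt2 i m)
     \<and> norm (schauder_block p f (tt2 i m) - schauder_block p f (tt0 i m))
          \<le> 2 powr (real_of_int (p + 2 - int i)) * supnorm01 (schauder_block p f)"
  proof (cases "p = -1")
    case True
    then show ?thesis using A0 by (simp add: block_m1 scaleR_2)
  next
    case False
    have "0 \<le> p" using p False by simp
    then obtain p' where p': "p = int p'" using nonneg_int_cases by blast
    have pi: "p' < i" using p(2) p' by simp
    obtain k where k: "real k / 2^(p'+1) \<le> tt0 i m" "tt2 i m \<le> (real k + 1) / 2^(p'+1)"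
      "(real k + 1) / 2^(p'+1) \<le> 1" using piece_exists[OF pi m] by blast
    define a where "a = real k / 2^(p'+1)"
    define b where "b = (real k + 1) / 2^(p'+1)"
    have ka: "a \<le> tt0 i m" "tt2 i m \<le> b" "b \<le> 1" "0 \<le> a" using k by (simp_all add: a_def b_def)
    have af: "aff (schauder_block p f) a b" unfolding a_def b_def p' by (rule block_aff)
    have first: "2 *\<^sub>R schauder_block p f (tt1 i m) = schauder_block p f (tt0 i m) + schauder_block p f (tt2 i m)"
      unfolding mid by (rule aff_mid[OF af ka(1) t02 ka(2)])
    have diffeq: "schauder_block p f (tt2 i m) - schauder_block p f (tt0 i m)
        = ((tt2 i m - tt0 i m) / (b - a)) *\<^sub>R (schauder_block p f b - schauder_block p f a)"
      by (rule aff_diff[OF af ka(1) t02 ka(2)])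
    have ratio: "(tt2 i m - tt0 i m) / (b - a) = 2^(p'+1) / 2^i"
      by (simp add: tt0_def tt2_def a_def b_def field_simps)
    have nb: "norm (schauder_block p f b - schauder_block p f a) \<le> 2 * supnorm01 (schauder_block p f)"
    proof -
      have "norm (schauder_block p f b - schauder_block p f a) \<le> norm (schauder_block p f b) + norm (schauder_block p f a)"
        by (rule norm_triangle_ineq4)
      also have "\<dots> \<le> supnorm01 (schauder_block p f) + supnorm01 (schauder_block p f)"
      proof (rule add_mono)
        have "0 \<le> b" "a \<le> 1" using ka t02 R(1,3) by auto
        then show "norm (schauder_block p f b) \<le> supnorm01 (schauder_block p f)"
          and "norm (schauder_block p f a) \<le> supnorm01 (schauder_block p f)"
          using block_le_sup[OF p(1), of b f] block_le_sup[OF p(1), of a f] ka by auto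
      qed
      finally show ?thesis by simp
    qed
    have "norm (schauder_block p f (tt2 i m) - schauder_block p f (tt0 i m))
        = 2^(p'+1) / 2^i * norm (schauder_block p f b - schauder_block p f a)"
      unfolding diffeq ratio norm_scaleR by simp
    also have "\<dots> \<le> 2^(p'+1) / 2^i * (2 * supnorm01 (schauder_block p f))"
      by (rule mult_left_mono[OF nb]) simp
    also have "\<dots> = 2 powr (real_of_int (p + 2 - int i)) * supnorm01 (schauder_block p f)"
      unfolding p' powr_int_nat by (simp add: field_simps)
    finally show ?thesis using first by simp
  qed
  then show "2 *\<^sub>R schauder_block p f (tt1 i m) = schauder_block p f (tt0 i m) + schauder_block p f (tt2 i m)"
    and "norm (schauder_block p f (tt2 i m) - schauder_block p f (tt0 i m))
          \<le> 2 powr (real_of_int (p + 2 - int i)) * supnorm01 (schauder_block p f)" by auto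
qed



lemma sup_le:
  assumes "\<And>t. t \<in> {0..1} \<Longrightarrow> norm (g t) \<le> X"
  shows "supnorm01 g \<le> X"
  unfolding supnorm01_def by (rule cSUP_least) (use assms in auto)

lemma powr_combine:
  "(1/2) * ((2 powr real_of_int (p + 2 - i) * A) * (2 powr real_of_int (q + 2 - i) * B))
   = 8 * 2 powr real_of_int (p + q - 2*i) * A * (B::real)"
proof -
  have e: "real_of_int (p + 2 - i) + real_of_int (q + 2 - i) = real_of_int (p + q - 2*i) + 4" by simp
  have "2 powr real_of_int (p + 2 - i) * 2 powr real_of_int (q + 2 - i) = (2::real) powr (real_of_int (p + q - 2*i) + 4)"
    by (simp only: powr_add[symmetric] e)
  also have "\<dots> = 2 powr real_of_int (p + q - 2*i) * 16" by (simp add: powr_add powr_numeral)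
  finally have "2 powr real_of_int (p + 2 - i) * 2 powr real_of_int (q + 2 - i) = 2 powr real_of_int (p + q - 2*i) * (16::real)" .
  then show ?thesis by (simp add: algebra_simps)
qed

context
  fixes v :: "real \<Rightarrow> ('d::euclidean_space \<Rightarrow>\<^sub>L 'n::euclidean_space)" and w :: "real \<Rightarrow> 'd"
    and p q :: int
  assumes p: "p \<ge> -1" and q: "q \<ge> -1"
begin

definition "PP = (\<lambda>t. blinfun_apply (schauder_block p v t) (schauder_block q w t))"

lemma PP_bound: "s \<in> {0..1} \<Longrightarrow> norm (PP s) \<le> supnorm01 (schauder_block p v) * supnorm01 (schauder_block q w)"
proof -
  assume s: "s \<in> {0..1}"
  have "norm (PP s) \<le> norm (schauder_block p v s) * norm (schauder_block q w s)"
    unfolding PP_def by (rule norm_blinfun)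
  also have "\<dots> \<le> supnorm01 (schauder_block p v) * supnorm01 (schauder_block q w)"
    by (rule mult_mono[OF block_le_sup[OF p s] block_le_sup[OF q s] sup_nonneg[OF p] norm_ge_zero])
  finally show ?thesis .
qed

lemma AB0: "0 \<le> supnorm01 (schauder_block p v) * supnorm01 (schauder_block q w)"
  using sup_nonneg[OF p, of v] sup_nonneg[OF q, of w] by simp

lemma crude_bound: "t \<in> {0..1} \<Longrightarrow> i \<ge> -1 \<Longrightarrow>
  norm (schauder_block i PP t) \<le> 8 * (supnorm01 (schauder_block p v) * supnorm01 (schauder_block q w))"
proof -
  assume t: "t \<in> {0..1}" and i: "i \<ge> -1"
  show ?thesis
  proof (cases "i = -1")
    case True
    then show ?thesis using PP_bound[of 0] AB0 by (simp add: block_m1)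
  next
    case False
    have "0 \<le> i" using i False by simp
    then obtain i' where i': "i = int i'" using nonneg_int_cases by blast
    have "norm (schauder_block (int i') PP t) \<le> 2 * (4 * (supnorm01 (schauder_block p v) * supnorm01 (schauder_block q w)))"
      by (rule block_bound_sharp[OF t coeff_crude[OF PP_bound]])
    then show ?thesis by (simp add: i')
  qed
qed

lemma refined_coeff:
  assumes pi: "p < int i" and qi: "q < int i" and m: "m \<in> schauder_idx (int i)"
  shows "norm (schauder_coeff PP (int i) m) \<le>
     8 * 2 powr real_of_int (p + q - 2 * int i) * supnorm01 (schauder_block p v) * supnorm01 (schauder_block q w)"
proof -
  have R0: "0 \<le> 8 * 2 powr real_of_int (p + q - 2 * int i) * supnorm01 (schauder_block p v) * supnorm01 (schauder_block q w)"
    using sup_nonneg[OF p, of v] sup_nonneg[OF q, of w] by simp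
  show ?thesis
  proof (cases "m = 0")
    case True
    show ?thesis
    proof (cases "i = 0")
      case True
      then have "p = -1" "q = -1" using p q pi qi by auto
      then have "PP 1 = PP 0" unfolding PP_def by (simp add: block_m1)
      then show ?thesis using R0 \<open>m = 0\<close> True by (simp add: schauder_coeff_def)
    qed (use True R0 in \<open>simp add: schauder_coeff_def\<close>)
  next
    case False
    then have m1: "1 \<le> m" "m \<le> 2^i" using m by (auto simp: schauder_idx_def)
    note DV = block_diff_bound[OF p pi m1, of v]
    note DW = block_diff_bound[OF q qi m1, of w]
    have "schauder_coeff PP (int i) m = 2 *\<^sub>R PP (tt1 i m) - PP (tt0 i m) - PP (tt2 i m)"
      using False by (simp add: schauder_coeff_def)
    also have "\<dots> = - ((1/2) *\<^sub>R blinfun_apply (schauder_block p v (tt2 i m) - schauder_block p v (tt0 i m))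
                     (schauder_block q w (tt2 i m) - schauder_block q w (tt0 i m)))"
      unfolding PP_def by (rule bilin_second_diff[OF DV(1) DW(1)])
    finally have "norm (schauder_coeff PP (int i) m) = (1/2) * norm (blinfun_apply (schauder_block p v (tt2 i m) - schauder_block p v (tt0 i m))
                     (schauder_block q w (tt2 i m) - schauder_block q w (tt0 i m)))" by simp
    also have "\<dots> \<le> (1/2) * (norm (schauder_block p v (tt2 i m) - schauder_block p v (tt0 i m))
                     * norm (schauder_block q w (tt2 i m) - schauder_block q w (tt0 i m)))"
      by (rule mult_left_mono[OF norm_blinfun]) simp
    also have "\<dots> \<le> (1/2) * ((2 powr real_of_int (p + 2 - int i) * supnorm01 (schauder_block p v))
                     * (2 powr real_of_int (q + 2 - int i) * supnorm01 (schauder_block q w)))"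
      by (intro mult_left_mono mult_mono DV(2) DW(2)) (simp_all add: sup_nonneg[OF p])
    also have "\<dots> = 8 * 2 powr real_of_int (p + q - 2 * int i) * supnorm01 (schauder_block p v) * supnorm01 (schauder_block q w)"
      by (rule powr_combine)
    finally show ?thesis .
  qed
qed

lemma refined_bound:
  assumes t: "t \<in> {0..1}" and pi: "p < int i" and qi: "q < int i"
  shows "norm (schauder_block (int i) PP t) \<le>
     16 * 2 powr real_of_int (p + q - 2 * int i) * supnorm01 (schauder_block p v) * supnorm01 (schauder_block q w)"
  using block_bound_sharp[OF t refined_coeff[OF pi qi]] by simp

end

theorem mainTheorem6:
  "\<exists>C::real. \<forall>(i::int) (p::int) (q::int)
      (v :: real \<Rightarrow> ('d::euclidean_space \<Rightarrow>\<^sub>L 'n::euclidean_space)) (w :: real \<Rightarrow> 'd).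
     i \<ge> -1 \<longrightarrow> p \<ge> -1 \<longrightarrow> q \<ge> -1 \<longrightarrow>
     continuous_on {0..1} v \<longrightarrow> continuous_on {0..1} w \<longrightarrow>
     (let P = (\<lambda>t. blinfun_apply (schauder_block p v t) (schauder_block q w t)) in
       (max p q \<le> i \<longrightarrow>
          (if (i = q \<and> q > p) \<or> (i = p \<and> p > q)
           then supnorm01 (schauder_block i P)
                  \<le> C * supnorm01 (schauder_block p v) * supnorm01 (schauder_block q w)
           else supnorm01 (schauder_block i P)
                  \<le> C * 2 powr (real_of_int (- max i (max p q) - i + p + q))
                      * supnorm01 (schauder_block p v) * supnorm01 (schauder_block q w)))
       \<and> ((p > i \<or> q > i) \<longrightarrow> (\<forall>t\<in>{0..1}. schauder_block i P t = 0)))"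
proof (rule exI[of _ 16], intro allI impI)
  fix i p q :: int and v :: "real \<Rightarrow> ('d::euclidean_space \<Rightarrow>\<^sub>L 'n::euclidean_space)" and w :: "real \<Rightarrow> 'd"
  assume i: "i \<ge> -1" and p: "p \<ge> -1" and q: "q \<ge> -1"
  define A where "A = supnorm01 (schauder_block p v)"
  define B where "B = supnorm01 (schauder_block q w)"
  have PPe: "PP v w p q = (\<lambda>t. blinfun_apply (schauder_block p v t) (schauder_block q w t))"
    by (rule PP_def[OF p q])
  have crude: "supnorm01 (schauder_block i (PP v w p q)) \<le> 8 * (A * B)"
    unfolding A_def B_def by (rule sup_le, rule crude_bound[OF p q], simp_all add: i)
  have AB: "0 \<le> A * B" unfolding A_def B_def by (rule AB0[OF p q])
  have part1: "max p q \<le> i \<longrightarrow>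
          (if (i = q \<and> q > p) \<or> (i = p \<and> p > q)
           then supnorm01 (schauder_block i (PP v w p q)) \<le> 16 * A * B
           else supnorm01 (schauder_block i (PP v w p q))
                  \<le> 16 * 2 powr (real_of_int (- max i (max p q) - i + p + q)) * A * B)"
  proof (intro impI)
    assume mx: "max p q \<le> i"
    show "if (i = q \<and> q > p) \<or> (i = p \<and> p > q)
           then supnorm01 (schauder_block i (PP v w p q)) \<le> 16 * A * B
           else supnorm01 (schauder_block i (PP v w p q))
                  \<le> 16 * 2 powr (real_of_int (- max i (max p q) - i + p + q)) * A * B"
    proof (cases "(i = q \<and> q > p) \<or> (i = p \<and> p > q)")
      case True
      then show ?thesis using crude AB by simp
    next
      case False
      show ?thesis
      proof (cases "p < i \<and> q < i")
        case True
        then have "0 \<le> i" using p by simp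
        then obtain i' where i': "i = int i'" using nonneg_int_cases by blast
        have r: "supnorm01 (schauder_block (int i') (PP v w p q)) \<le> 16 * 2 powr real_of_int (p + q - 2 * int i') * A * B"
          unfolding A_def B_def by (rule sup_le, rule refined_bound[OF p q]) (use True i' in auto)
        have ex: "real_of_int (- max i (max p q) - i + p + q) = real_of_int (p + q - 2 * int i')"
          using mx i' by simp
        have "supnorm01 (schauder_block i (PP v w p q)) \<le> 16 * 2 powr (real_of_int (- max i (max p q) - i + p + q)) * A * B"
          unfolding ex unfolding i' by (rule r)
        then show ?thesis unfolding if_not_P[OF False] .
      next
        case nt: False
        then have "p = i" "q = i" using mx False by auto
        then show ?thesis using False crude AB by simp
      qed
    qed
  qed
  have part2: "(p > i \<or> q > i) \<longrightarrow> (\<forall>t\<in>{0..1}. schauder_block i (PP v w p q) t = 0)"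
    unfolding PPe using part2[OF i] by blast
  show "let P = (\<lambda>t. blinfun_apply (schauder_block p v t) (schauder_block q w t)) in
       (max p q \<le> i \<longrightarrow>
          (if (i = q \<and> q > p) \<or> (i = p \<and> p > q)
           then supnorm01 (schauder_block i P)
                  \<le> 16 * supnorm01 (schauder_block p v) * supnorm01 (schauder_block q w)
           else supnorm01 (schauder_block i P)
                  \<le> 16 * 2 powr (real_of_int (- max i (max p q) - i + p + q))
                      * supnorm01 (schauder_block p v) * supnorm01 (schauder_block q w)))
       \<and> ((p > i \<or> q > i) \<longrightarrow> (\<forall>t\<in>{0..1}. schauder_block i P t = 0))"
    unfolding Let_def using part1 part2 unfolding PPe A_def B_def by blast
qed

end
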